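(* Let $N,M_s,M_d\ge1$ be integers, $P_s,P_r,\sigma_r^2,\sigma_d^2>0$, $\varepsilon\ge 0$, $\mathbf H_{sr}\in\mathbb C^{N\times M_s}$ and $\tilde{\mathbf H}_{rd}\in\mathbb C^{M_d\times N}$. Consider the problem $$\mathcal P_1:\ \max_{\mathbf W\in\mathbb C^{N\times N},\,\mathbf b\in\mathbb C^{M_s},\,\mathbf r\in\mathbb C^{M_d}}\ \min_{\|\Delta \mathbf H\|_F\leq \varepsilon}\frac{P_s|\mathbf r^H(\tilde {\mathbf H}_{rd}+\Delta \mathbf H)\mathbf W\mathbf H_{sr}\mathbf b|^2}{\sigma_r^2\|\mathbf r^H(\tilde {\mathbf H}_{rd}+\Delta \mathbf H)\mathbf W\|_2^2+\sigma_d^2}$$ subject to $[P_s\mathbf W\mathbf H_{sr}\mathbf b\mathbf b^H\mathbf H_{sr}^H\mathbf W^H+\sigma_r^2\mathbf W\mathbf W^H]_{i,i}\leq P_r$ for $i=1,\dots,N$, $\|\mathbf b\|_2=1$, $\|\mathbf r\|_2=1$ (the minimum being over $\Delta\mathbf H\in\mathbb C^{M_d\times N}$). Let $f^\circ$ be the maximum value and $\mathbf w^\circ$ an optimal solution of $$\max_{\mathbf w\in\mathbb C^N}\ f(\mathbf w)= \|\tilde {\mathbf H}_{rd}\mathbf w\|_2-\varepsilon\|\mathbf w\|_2\quad\text{s.t. } |w_i|\le 1,\ i=1,\dots,N.$$ Then the optimal $(\mathbf W,\mathbf b,\mathbf r)$ of $\mathcal P_1$ are given by $$\mathbf W=\sqrt{\frac{P_r}{\|\mathbf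 H_{sr}\mathbf b\|_2^2(P_s\|\mathbf H_{sr}\mathbf b\|_2^2+\sigma_r^2)}}\,\mathbf w^\circ\mathbf b^{ H}\mathbf H_{sr}^H,\qquad \mathbf b={\bm \nu}(\mathbf H_{sr}^H\mathbf H_{sr}),\qquad \mathbf r=\frac{\tilde {\mathbf H}_{rd}\mathbf w^\circ}{\|\tilde {\mathbf H}_{rd}\mathbf w^\circ\|_2},$$ and the optimal received SNR is $$\text{SNR}=\frac{\tilde P_r^2P_s\|\mathbf H_{sr}\mathbf b\|_2^2\max\{f^\circ, 0\}^2}{\tilde P_r^2\sigma_r^2\max\{f^\circ, 0\}^2+\sigma_d^2},\qquad \tilde P_r=\sqrt{\frac{P_r}{P_s\|\mathbf H_{sr}\mathbf b\|_2^2+\sigma_r^2}}.$$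
   Context: ${\bm \nu}(\mathbf A)$ denotes a unit-norm eigenvector associated with the largest eigenvalue of a Hermitian matrix $\mathbf A$. $[\mathbf A]_{i,i}$ is the $i$-th diagonal entry; $(\cdot)^H$ conjugate transpose; $\|\cdot\|_2$ Euclidean norm; $\|\cdot\|_F$ Frobenius norm; $w_i$ is the $i$-th entry of $\mathbf w$. The setting is a two-hop amplify-and-forward relay: source beamformer $\mathbf b$, relay matrix $\mathbf W$, destination beamformer $\mathbf r$, first-hop channel $\mathbf H_{sr}$, estimated second-hop channel $\tilde{\mathbf H}_{rd}$ with error $\Delta\mathbf H$ bounded by $\varepsilon$, source power $P_s$, per-antenna relay power limit $P_r$, noise variances $\sigma_r^2,\sigma_d^2$. *)

theory Defs
  imports "HOL-Analysis.Analysis"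
begin

text \<open>Complex vectors are \<open>complex ^ 'n\<close>; an m x n complex matrix is
  \<open>complex ^ 'n ^ 'm\<close> (rows indexed by 'm). The library \<open>norm\<close> on vectors is the
  Euclidean 2-norm, and on matrices (vectors of rows) it is the Frobenius norm.\<close>

definition ctrans :: "complex ^ 'n ^ 'm \<Rightarrow> complex ^ 'm ^ 'n" where
  "ctrans A = (\<chi> i j. cnj (A $ j $ i))"

definition vcnj :: "complex ^ 'n \<Rightarrow> complex ^ 'n" where
  "vcnj v = (\<chi> i. cnj (v $ i))"

definition cinner :: "complex ^ 'n \<Rightarrow> complex ^ 'n \<Rightarrow> complex" where
  "cinner r x = (\<Sum>i\<in>UNIV. cnj (r $ i) * x $ i)"

definition outer :: "complex ^ 'm \<Rightarrow> complex ^ 'n \<Rightarrow> complex ^ 'n ^ 'm" where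
  "outer u v = (\<chi> i j. u $ i * cnj (v $ j))"

text \<open>\<open>v\<close> is a unit-norm eigenvector of \<open>A\<close> associated with its largest eigenvalue
  (any admissible choice of \<open>\<nu>(A)\<close>).\<close>
definition is_top_eigvec :: "complex ^ 'n ^ 'n \<Rightarrow> complex ^ 'n \<Rightarrow> bool" where
  "is_top_eigvec A v \<longleftrightarrow> norm v = 1 \<and>
     (\<exists>lam::real. A *v v = complex_of_real lam *s v \<and>
        (\<forall>(\<mu>::complex) u. u \<noteq> 0 \<and> A *v u = \<mu> *s u \<longrightarrow> Re \<mu> \<le> lam))"

definition snr :: "real \<Rightarrow> real \<Rightarrow> real \<Rightarrow> complex ^ 'ms ^ 'n \<Rightarrow> complex ^ 'n ^ 'md
     \<Rightarrow> complex ^ 'n ^ 'n \<Rightarrow> complex ^ 'ms \<Rightarrow> complex ^ 'md \<Rightarrow> complex ^ 'n ^ 'md \<Rightarrow> real" where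
  "snr Ps sr2 sd2 Hsr Hrd W b r \<Delta> =
     Ps * (cmod (cinner r ((((Hrd + \<Delta>) ** W) ** Hsr) *v b)))\<^sup>2 /
     (sr2 * (norm (vcnj r v* ((Hrd + \<Delta>) ** W)))\<^sup>2 + sd2)"

definition robust_snr :: "real \<Rightarrow> real \<Rightarrow> real \<Rightarrow> real \<Rightarrow> complex ^ 'ms ^ 'n \<Rightarrow> complex ^ 'n ^ 'md
     \<Rightarrow> complex ^ 'n ^ 'n \<Rightarrow> complex ^ 'ms \<Rightarrow> complex ^ 'md \<Rightarrow> real" where
  "robust_snr Ps sr2 sd2 \<epsilon> Hsr Hrd W b r =
     Inf {snr Ps sr2 sd2 Hsr Hrd W b r \<Delta> | \<Delta>. norm \<Delta> \<le> \<epsilon>}"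

text \<open>Feasible set of problem P1 (the diagonal entries are real; we compare their real parts).\<close>
definition feasible1 :: "real \<Rightarrow> real \<Rightarrow> real \<Rightarrow> complex ^ 'ms ^ 'n
     \<Rightarrow> complex ^ 'n ^ 'n \<Rightarrow> complex ^ 'ms \<Rightarrow> complex ^ 'md \<Rightarrow> bool" where
  "feasible1 Ps Pr sr2 Hsr W b r \<longleftrightarrow>
     (\<forall>i. Re ((Ps *\<^sub>R (W ** Hsr ** outer b b ** ctrans Hsr ** ctrans W)
               + sr2 *\<^sub>R (W ** ctrans W)) $ i $ i) \<le> Pr)
     \<and> norm b = 1 \<and> norm r = 1"

definition fobj :: "real \<Rightarrow> complex ^ 'n ^ 'md \<Rightarrow> complex ^ 'n \<Rightarrow> real" where
  "fobj \<epsilon> Hrd w = norm (Hrd *v w) - \<epsilon> * norm w"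

end

theory Submission
  imports Defs
begin


lemma norm_sq_vec: "(norm (x::complex^'n))\<^sup>2 = (\<Sum>i\<in>UNIV. (cmod (x$i))\<^sup>2)"
  unfolding norm_vec_def L2_set_def by (simp add: sum_nonneg)

lemma cs_bil: "cmod (\<Sum>j\<in>UNIV. (a::complex^'n)$j * b$j) \<le> norm a * norm b"
proof -
  have "cmod (\<Sum>j\<in>UNIV. a$j * b$j) \<le> (\<Sum>j\<in>UNIV. \<bar>cmod (a$j)\<bar> * \<bar>cmod (b$j)\<bar>)"
    by (rule order_trans[OF norm_sum]) (simp add: norm_mult)
  also have "\<dots> \<le> L2_set (\<lambda>j. cmod (a$j)) UNIV * L2_set (\<lambda>j. cmod (b$j)) UNIV"
    by (rule L2_set_mult_ineq)
  finally show ?thesis by (simp add: norm_vec_def)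
qed

lemma norm_vcnj[simp]: "norm (vcnj v) = norm v"
  by (simp add: vcnj_def norm_vec_def)

lemma vcnj_nth[simp]: "vcnj v $ i = cnj (v $ i)"
  by (simp add: vcnj_def)

lemma cs_cinner: "cmod (cinner r y) \<le> norm r * norm y"
  using cs_bil[of "vcnj r" y] by (simp add: cinner_def)

lemma cinner_add: "cinner r (y + z) = cinner r y + cinner r z"
  by (simp add: cinner_def algebra_simps sum.distrib)

lemma cinner_self: "cinner r r = complex_of_real ((norm r)\<^sup>2)"
  by (simp add: cinner_def norm_sq_vec mult.commute flip: complex_norm_square)

lemma cinner_mv: "cinner r (M *v y) = (\<Sum>j\<in>UNIV. (vcnj r v* M)$j * y$j)"
  unfolding cinner_def matrix_vector_mult_def vector_matrix_mult_def
  by (simp add: sum_distrib_left sum_distrib_right mult.assoc) (rule sum.swap)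

lemma cs_mv: "cmod (cinner r (M *v y)) \<le> norm (vcnj r v* M) * norm y"
  unfolding cinner_mv by (rule cs_bil)

lemma norm_mv: "norm ((M::complex^'n^'m) *v x) \<le> norm M * norm x"
proof -
  have "(cmod ((M *v x)$i))\<^sup>2 \<le> (norm (M$i))\<^sup>2 * (norm x)\<^sup>2" for i
  proof -
    have "cmod ((M *v x)$i) \<le> norm (M$i) * norm x"
      using cs_bil[of "M$i" x] by (simp add: matrix_vector_mult_def)
    then show ?thesis by (metis norm_ge_zero power_mono power_mult_distrib)
  qed
  then have "(norm (M *v x))\<^sup>2 \<le> (\<Sum>i\<in>UNIV. (norm (M$i))\<^sup>2) * (norm x)\<^sup>2"
    unfolding norm_sq_vec[of "M *v x"] sum_distrib_right by (rule sum_mono)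
  also have "(\<Sum>i\<in>UNIV. (norm (M$i))\<^sup>2) = (norm M)\<^sup>2"
    unfolding norm_vec_def L2_set_def by (simp add: sum_nonneg)
  finally have "(norm (M *v x))\<^sup>2 \<le> (norm M * norm x)\<^sup>2" by (simp add: power_mult_distrib)
  then show ?thesis by (simp add: power2_le_iff_abs_le)
qed



lemma mv_scaleR: "(A::complex^'n^'m) *v (c *\<^sub>R x) = c *\<^sub>R (A *v x)"
  using matrix_vector_mul_linear[of A] by (simp add: linear_iff)

lemma outer_left: "A ** outer b c = outer (A *v b) c"
  by (simp add: outer_def matrix_matrix_mult_def matrix_vector_mult_def vec_eq_iff
      sum_distrib_right mult.assoc)

lemma outer_ctrans: "outer x c ** ctrans Z = outer x (Z *v c)"
  by (simp add: outer_def ctrans_def matrix_matrix_mult_def matrix_vector_mult_def vec_eq_iff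
      sum_distrib_left mult_ac)

lemma diag_formula:
  "Re ((Ps *\<^sub>R (W ** Hsr ** outer b b ** ctrans Hsr ** ctrans W)
               + sr2 *\<^sub>R (W ** ctrans W)) $ i $ i)
   = Ps * (cmod ((W *v (Hsr *v b))$i))\<^sup>2 + sr2 * (norm (W$i))\<^sup>2"
proof -
  have "W ** Hsr ** outer b b ** ctrans Hsr ** ctrans W = outer (W *v (Hsr *v b)) (W *v (Hsr *v b))"
    by (simp add: outer_left outer_ctrans matrix_vector_mul_assoc)
  moreover have "Re ((W ** ctrans W)$i$i) = (norm (W$i))\<^sup>2"
    by (simp add: matrix_matrix_mult_def ctrans_def norm_sq_vec Re_sum
        flip: complex_norm_square)
  moreover have "Re (outer x x $ i $ i) = (cmod (x$i))\<^sup>2" for x :: "complex^_"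
    by (simp add: outer_def flip: complex_norm_square)
  ultimately show ?thesis by simp
qed

definition rk1 :: "complex \<Rightarrow> complex^'m \<Rightarrow> complex^'n \<Rightarrow> complex^'n^'m" where
  "rk1 c r x = (\<chi> i j. c * r$i * cnj (x$j))"

lemma norm_rk1: "norm (rk1 c r x) = cmod c * norm r * norm x"
proof -
  have "(norm (rk1 c r x))\<^sup>2 = (\<Sum>i\<in>UNIV. (norm (rk1 c r x $ i))\<^sup>2)"
    unfolding norm_vec_def L2_set_def by (simp add: sum_nonneg)
  also have "\<dots> = (\<Sum>i\<in>UNIV. (cmod c)\<^sup>2 * (cmod (r$i))\<^sup>2 * (norm x)\<^sup>2)"
    by (simp add: norm_sq_vec rk1_def norm_mult
        power_mult_distrib sum_distrib_left)
  also have "\<dots> = (cmod c * norm r * norm x)\<^sup>2"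
    by (simp add: norm_sq_vec[of r] power_mult_distrib sum_distrib_left sum_distrib_right)
  finally show ?thesis
    by (metis norm_ge_zero mult_nonneg_nonneg power2_eq_iff_nonneg)
qed

lemma cinner_rk1: "cinner r (rk1 c r x *v x) = c * complex_of_real ((norm r)\<^sup>2 * (norm x)\<^sup>2)"
proof -
  have "rk1 c r x *v x = (\<chi> i. c * r$i * cinner x x)"
    by (simp add: rk1_def matrix_vector_mult_def cinner_def vec_eq_iff sum_distrib_left mult.assoc)
  then have "cinner r (rk1 c r x *v x) = c * cinner x x * cinner r r"
    by (simp add: cinner_def sum_distrib_left mult_ac) (rule sum.swap)
  then show ?thesis by (simp add: cinner_self)
qed

lemma inner_cmult: "inner ((a::complex) * b) c = inner b (cnj a * c)"
  by (simp add: inner_complex_def algebra_simps)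

lemma inner_mv: "inner ((M::complex^'n^'m) *v x) y = inner x (ctrans M *v y)"
  unfolding inner_vec_def matrix_vector_mult_def ctrans_def
  by (simp add: inner_sum_left inner_sum_right inner_cmult) (rule sum.swap)

lemma norm_diff_scaleR_sq:
  "(norm (a - t *\<^sub>R b))\<^sup>2 = (norm a)\<^sup>2 - 2*t*inner a b + t\<^sup>2*(norm b)\<^sup>2"
  by (simp only: power2_norm_eq_inner) (simp add: inner_diff_left inner_diff_right inner_commute algebra_simps power2_eq_square)



lemma smult_real: "complex_of_real a *s (v::complex^'n) = a *\<^sub>R v"
  by (simp add: vec_eq_iff) (simp add: scaleR_conv_of_real)

lemma q_cont: "continuous_on S (\<lambda>z. (norm ((H::complex^'n^'m) *v z))\<^sup>2)"
proof -
  have "bounded_linear (\<lambda>z. H *v z)"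
    using matrix_vector_mul_linear[of H] linear_conv_bounded_linear by blast
  then have "continuous_on S (\<lambda>z. H *v z)" by (rule linear_continuous_on)
  then show ?thesis by (intro continuous_intros)
qed

lemma rayleigh:
  fixes H :: "complex^'n^'m"
  assumes top: "is_top_eigvec (ctrans H ** H) b" and nb: "norm b' = 1"
  shows "(norm (H *v b'))\<^sup>2 \<le> (norm (H *v b))\<^sup>2"
proof -
  define A where "A = ctrans H ** H"
  define q where "q = (\<lambda>z. (norm (H *v z))\<^sup>2)"
  have Aeq: "A *v z = ctrans H *v (H *v z)" for z
    by (simp add: A_def matrix_vector_mul_assoc)
  have qinner: "inner (H *v y) (H *v z) = inner y (A *v z)" for y z
    by (simp add: inner_mv Aeq)
  obtain lam where nb1: "norm b = 1" and eig: "A *v b = complex_of_real lam *s b"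
    and lam_top: "\<And>\<mu> u. u \<noteq> 0 \<Longrightarrow> A *v u = \<mu> *s u \<Longrightarrow> Re \<mu> \<le> lam"
    using top unfolding is_top_eigvec_def A_def by blast
  have qb: "q b = lam"
  proof -
    have "q b = inner (H *v b) (H *v b)" by (simp add: q_def power2_norm_eq_inner)
    also have "\<dots> = inner b (lam *\<^sub>R b)" by (simp add: qinner eig smult_real)
    also have "\<dots> = lam" using nb1 by (simp add: power2_norm_eq_inner[symmetric])
    finally show ?thesis .
  qed
  have "compact (sphere (0::complex^'n) 1)" by simp
  moreover have "sphere (0::complex^'n) 1 \<noteq> {}" using nb1 by auto
  ultimately obtain u where u: "u \<in> sphere 0 1" and umax: "\<And>z. z \<in> sphere 0 1 \<Longrightarrow> q z \<le> q u"
    using continuous_attains_sup[of "sphere (0::complex^'n) 1" q] q_cont unfolding q_def by blast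
  define \<mu> where "\<mu> = q u"
  have nu: "norm u = 1" using u by simp
  have bound: "q z \<le> \<mu> * (norm z)\<^sup>2" for z
  proof (cases "z = 0")
    case True then show ?thesis by (simp add: q_def)
  next
    case False
    define v where "v = (1 / norm z) *\<^sub>R z"
    have "v \<in> sphere 0 1" using False by (simp add: v_def)
    then have "q v \<le> \<mu>" using umax \<mu>_def by blast
    moreover have "z = norm z *\<^sub>R v" using False by (simp add: v_def)
    then have "q z = (norm z)\<^sup>2 * q v"
      by (metis (no_types) q_def mv_scaleR norm_scaleR abs_norm_cancel power_mult_distrib)
    ultimately show ?thesis
      by (metis mult.commute mult_right_mono zero_le_power2)
  qed
  define d where "d = \<mu> *\<^sub>R u - A *v u"
  define C where "C = \<mu> * (norm d)\<^sup>2 - q d"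
  have key: "2 * (norm d)\<^sup>2 \<le> t * C" if t: "t > 0" for t
  proof -
    have "q (u - t *\<^sub>R d) \<le> \<mu> * (norm (u - t *\<^sub>R d))\<^sup>2" by (rule bound)
    moreover have "q (u - t *\<^sub>R d) = \<mu> - 2*t*inner u (A *v d) + t\<^sup>2 * q d"
    proof -
      have "H *v (u - t *\<^sub>R d) = H *v u - t *\<^sub>R (H *v d)"
        by (simp add: matrix_vector_mult_diff_distrib mv_scaleR)
      then show ?thesis
        by (simp add: q_def norm_diff_scaleR_sq qinner \<mu>_def)
    qed
    moreover have "(norm (u - t *\<^sub>R d))\<^sup>2 = 1 - 2*t*inner u d + t\<^sup>2*(norm d)\<^sup>2"
      by (simp add: norm_diff_scaleR_sq nu)
    moreover have "inner u (A *v d) = inner d (A *v u)"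
      by (metis qinner inner_commute)
    moreover have "\<mu> * inner u d - inner d (A *v u) = (norm d)\<^sup>2"
      by (simp add: d_def power2_norm_eq_inner inner_diff_left inner_commute)
    ultimately have I: "\<mu> - 2*t*inner d (A *v u) + t\<^sup>2*q d \<le> \<mu>*(1 - 2*t*inner u d + t\<^sup>2*(norm d)\<^sup>2)"
      and e: "\<mu> * inner u d - inner d (A *v u) = (norm d)\<^sup>2"
      by simp_all
    have "2*t*(\<mu> * inner u d - inner d (A *v u)) \<le> t\<^sup>2*(\<mu>*(norm d)\<^sup>2 - q d)"
      using I by (simp add: algebra_simps)
    then have "2*t*(norm d)\<^sup>2 \<le> t\<^sup>2 * C"
      unfolding C_def e .
    then show ?thesis using t by (simp add: power2_eq_square)
  qed
  have "d = 0"
  proof (rule ccontr)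
    assume "d \<noteq> 0"
    then have np: "(norm d)\<^sup>2 > 0" by simp
    define t where "t = (norm d)\<^sup>2 / (\<bar>C\<bar> + 1)"
    have tp: "t > 0" using np by (simp add: t_def add_pos_nonneg)
    have "t * C \<le> t * \<bar>C\<bar>" using tp by (simp add: mult_left_mono)
    also have "t * \<bar>C\<bar> < (norm d)\<^sup>2"
      using np by (simp add: t_def field_simps)
    finally show False using key[OF tp] np by linarith
  qed
  then have "A *v u = complex_of_real \<mu> *s u" by (simp add: d_def smult_real)
  moreover have "u \<noteq> 0" using nu by auto
  ultimately have "\<mu> \<le> lam" using lam_top by fastforce
  moreover have "q b' \<le> \<mu>" using umax nb \<mu>_def by simp
  ultimately show ?thesis using qb unfolding q_def by simp
qed



lemma frac_cross: "(D1::real)>0 \<Longrightarrow> D2>0 \<Longrightarrow> N1*D2 \<le> N2*D1 \<Longrightarrow> N1/D1 \<le> N2/D2"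
  by (simp add: divide_simps)
lemma g1: "(D::real)>0 \<Longrightarrow> sd2 > 0 \<Longrightarrow> Pr > 0 \<Longrightarrow> Y \<ge> 0 \<Longrightarrow> (Pr/D)*X/((Pr/D)*Y + sd2) = Pr*X/(Pr*Y + sd2*D)"
proof -
  assume a: "D>0" "sd2 > 0" "Pr > 0" "Y \<ge> 0"
  have "(Pr/D)*Y + sd2 = (Pr*Y + sd2*D)/D" using a by (simp add: field_simps)
  then show ?thesis using a by simp
qed
lemma g2: "(D::real)>0 \<Longrightarrow> h>0 \<Longrightarrow> Ps*(Pr*h/D*Q)*h/(sr2*(Pr*h/D*Q)+sd2*h) = Ps*Pr*Q*h/(sr2*Pr*Q + sd2*D)"
proof -
  assume a: "D>0" "h>0"
  have "sr2*(Pr*h/D*Q)+sd2*h = h*(sr2*Pr*Q + sd2*D)/D" using a by (simp add: field_simps)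
  moreover have "Ps*(Pr*h/D*Q)*h = h * (Ps*Pr*Q*h) / D" using a by (simp add: field_simps)
  ultimately show ?thesis using a by simp
qed

definition E :: "real \<Rightarrow> real \<Rightarrow> real \<Rightarrow> real \<Rightarrow> real \<Rightarrow> real \<Rightarrow> real" where
  "E Ps Pr sr2 sd2 F h = Ps * Pr * F\<^sup>2 * h / (sr2 * Pr * F\<^sup>2 + sd2 * (Ps * h + sr2))"


lemma E_mono:
  assumes "Ps > 0" "Pr > 0" "sr2 > 0" "sd2 > 0" "0 \<le> h'" "h' \<le> h"
  shows "E Ps Pr sr2 sd2 F h' \<le> E Ps Pr sr2 sd2 F h"
proof -
  define a where "a = sr2 * Pr * F\<^sup>2 + sd2 * sr2"
  have sp: "sd2 * sr2 > 0" using assms by simp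
  have "sr2 * Pr * F\<^sup>2 \<ge> 0" using assms by simp
  then have a: "a > 0" using sp unfolding a_def by linarith
  define c where "c = Ps * Pr * F\<^sup>2"
  have c: "c \<ge> 0" using assms unfolding c_def by simp
  have "h' * a \<le> h * a" using a assms by (intro mult_right_mono) auto
  then have "h' * (a + sd2*Ps*h) \<le> h * (a + sd2*Ps*h')"
    by (simp add: distrib_left mult_ac)
  then have "c * h' * (a + sd2*Ps*h) \<le> c * h * (a + sd2*Ps*h')"
    using c by (metis mult.assoc mult_left_mono)
  moreover have "a + sd2*Ps*h' > 0" "a + sd2*Ps*h > 0" using assms a
    by (simp_all add: add_pos_nonneg)
  moreover have "sr2 * Pr * F\<^sup>2 + sd2 * (Ps * h + sr2) = a + sd2*Ps*h"
    "sr2 * Pr * F\<^sup>2 + sd2 * (Ps * h' + sr2) = a + sd2*Ps*h'"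
    unfolding a_def by (simp_all add: distrib_left mult_ac)
  ultimately show ?thesis
    unfolding E_def c_def[symmetric] by (intro frac_cross) simp_all
qed

lemma E_eq_SNR:
  assumes "Ps > 0" "Pr > 0" "sr2 > 0" "sd2 > 0" "0 \<le> h"
  shows "(sqrt (Pr / (Ps * h + sr2)))\<^sup>2 * Ps * h * F\<^sup>2 / ((sqrt (Pr / (Ps * h + sr2)))\<^sup>2 * sr2 * F\<^sup>2 + sd2)
     = E Ps Pr sr2 sd2 F h"
proof -
  have "Ps * h \<ge> 0" using assms by simp
  then have p: "Ps * h + sr2 > 0" using assms by linarith
  define D where "D = Ps * h + sr2"
  have sq: "(sqrt (Pr / D))\<^sup>2 = Pr / D" using assms p unfolding D_def by simp
  have "(Pr / D) * (Ps * h * F\<^sup>2) / ((Pr / D) * (sr2 * F\<^sup>2) + sd2)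
     = Pr * (Ps * h * F\<^sup>2) / (Pr * (sr2 * F\<^sup>2) + sd2 * D)"
    using p assms unfolding D_def by (intro g1) auto
  then show ?thesis unfolding E_def D_def[symmetric] sq by (simp add: mult_ac)
qed

lemma step_a:
  fixes Ps sr2 sd2 h' t G :: real
  assumes "Ps > 0" "sr2 > 0" "sd2 > 0" "h' > 0" "t\<^sup>2 \<le> G\<^sup>2 * h'"
  shows "Ps * t\<^sup>2 / (sr2 * G\<^sup>2 + sd2) \<le> Ps * t\<^sup>2 * h' / (sr2 * t\<^sup>2 + sd2 * h')"
proof -
  have "sr2 * G\<^sup>2 \<ge> 0" "sr2 * t\<^sup>2 \<ge> 0" "sd2 * h' > 0" using assms by (auto intro!: mult_nonneg_nonneg mult_pos_pos)
  then have d1: "sr2 * G\<^sup>2 + sd2 > 0" and d2: "sr2 * t\<^sup>2 + sd2 * h' > 0" using assms by linarith+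
  have "sr2 * t\<^sup>2 \<le> sr2 * (G\<^sup>2 * h')" using assms by (intro mult_left_mono) auto
  then have "sr2 * t\<^sup>2 + sd2 * h' \<le> h' * (sr2 * G\<^sup>2 + sd2)"
    by (simp add: distrib_left mult_ac)
  moreover have "Ps * t\<^sup>2 \<ge> 0" using assms by simp
  ultimately have "(Ps * t\<^sup>2) * (sr2 * t\<^sup>2 + sd2 * h') \<le> (Ps * t\<^sup>2) * (h' * (sr2 * G\<^sup>2 + sd2))"
    by (rule mult_left_mono)
  then show ?thesis using d1 d2 by (intro frac_cross) (simp_all add: mult_ac)
qed

lemma step_b:
  fixes Ps sr2 sd2 h' T1 T2 :: real
  assumes "Ps > 0" "sr2 > 0" "sd2 > 0" "h' > 0" "0 \<le> T1" "T1 \<le> T2"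
  shows "Ps * T1 * h' / (sr2 * T1 + sd2 * h') \<le> Ps * T2 * h' / (sr2 * T2 + sd2 * h')"
proof -
  have "sr2 * T1 \<ge> 0" "sr2 * T2 \<ge> 0" "sd2 * h' > 0" using assms by (auto intro!: mult_nonneg_nonneg mult_pos_pos)
  then have d1: "sr2 * T1 + sd2 * h' > 0" "sr2 * T2 + sd2 * h' > 0" by linarith+
  have "T1 * (sd2 * h') \<le> T2 * (sd2 * h')" using assms by (intro mult_right_mono) auto
  then have "T1 * (sr2 * T2 + sd2 * h') \<le> T2 * (sr2 * T1 + sd2 * h')"
    by (simp add: distrib_left mult_ac)
  moreover have "Ps * h' \<ge> 0" using assms by simp
  ultimately have "(Ps * h') * (T1 * (sr2 * T2 + sd2 * h')) \<le> (Ps * h') * (T2 * (sr2 * T1 + sd2 * h'))"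
    by (intro mult_left_mono)
  then show ?thesis using d1 by (intro frac_cross) (simp_all add: mult_ac)
qed

lemma step_c:
  assumes "Ps > 0" "Pr > 0" "sr2 > 0" "sd2 > 0" "h' > 0"
  shows "Ps * (Pr * h' / (Ps * h' + sr2) * F\<^sup>2) * h' / (sr2 * (Pr * h' / (Ps * h' + sr2) * F\<^sup>2) + sd2 * h')
       = E Ps Pr sr2 sd2 F h'"
proof -
  have "Ps * h' > 0" using assms by simp
  then have p: "Ps * h' + sr2 > 0" using assms by linarith
  show ?thesis using g2[OF p assms(5), of Ps Pr "F\<^sup>2" sr2 sd2] unfolding E_def by (simp add: mult_ac)
qed

lemma final_bound:
  fixes Ps Pr sr2 sd2 h h' t F G :: real
  assumes "Ps > 0" "Pr > 0" "sr2 > 0" "sd2 > 0" "0 < h'" "h' \<le> h" "0 \<le> t"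
    "t \<le> sqrt (Pr * h' / (Ps * h' + sr2)) * F" "t\<^sup>2 \<le> G\<^sup>2 * h'"
  shows "Ps * t\<^sup>2 / (sr2 * G\<^sup>2 + sd2) \<le>
    (sqrt (Pr / (Ps * h + sr2)))\<^sup>2 * Ps * h * F\<^sup>2 / ((sqrt (Pr / (Ps * h + sr2)))\<^sup>2 * sr2 * F\<^sup>2 + sd2)"
proof -
  have "Ps * h' > 0" using assms by simp
  then have p: "Ps * h' + sr2 > 0" using assms by linarith
  have kk: "Pr * h' / (Ps * h' + sr2) \<ge> 0" using p assms by simp
  have k2: "(sqrt (Pr * h' / (Ps * h' + sr2)))\<^sup>2 = Pr * h' / (Ps * h' + sr2)"
    using kk by simp
  have tt: "t\<^sup>2 \<le> Pr * h' / (Ps * h' + sr2) * F\<^sup>2"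
  proof -
    have "t\<^sup>2 \<le> (sqrt (Pr * h' / (Ps * h' + sr2)) * F)\<^sup>2"
      using assms by (intro power_mono) auto
    then show ?thesis by (simp add: power_mult_distrib k2)
  qed
  have "Ps * t\<^sup>2 / (sr2 * G\<^sup>2 + sd2) \<le> Ps * t\<^sup>2 * h' / (sr2 * t\<^sup>2 + sd2 * h')"
    using assms by (intro step_a) auto
  also have "\<dots> \<le> Ps * (Pr * h' / (Ps * h' + sr2) * F\<^sup>2) * h' / (sr2 * (Pr * h' / (Ps * h' + sr2) * F\<^sup>2) + sd2 * h')"
    using assms tt by (intro step_b) auto
  also have "\<dots> = E Ps Pr sr2 sd2 F h'" using assms by (intro step_c) auto
  also have "\<dots> \<le> E Ps Pr sr2 sd2 F h" using assms by (intro E_mono) auto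
  also have "\<dots> = (sqrt (Pr / (Ps * h + sr2)))\<^sup>2 * Ps * h * F\<^sup>2 / ((sqrt (Pr / (Ps * h + sr2)))\<^sup>2 * sr2 * F\<^sup>2 + sd2)"
    using assms by (intro E_eq_SNR[symmetric]) auto
  finally show ?thesis .
qed



lemma snr_nonneg: "Ps > 0 \<Longrightarrow> sr2 > 0 \<Longrightarrow> sd2 > 0 \<Longrightarrow> snr Ps sr2 sd2 Hsr Hrd W b r D \<ge> 0"
  unfolding snr_def by (intro divide_nonneg_pos) (auto intro: add_nonneg_pos)

lemma robust_le:
  assumes "Ps > 0" "sr2 > 0" "sd2 > 0" "norm D \<le> \<epsilon>"
  shows "robust_snr Ps sr2 sd2 \<epsilon> Hsr Hrd W b r \<le> snr Ps sr2 sd2 Hsr Hrd W b r D"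
  unfolding robust_snr_def
proof (rule cInf_lower)
  show "snr Ps sr2 sd2 Hsr Hrd W b r D \<in> {snr Ps sr2 sd2 Hsr Hrd W b r \<Delta> |\<Delta>. norm \<Delta> \<le> \<epsilon>}"
    using assms by blast
  show "bdd_below {snr Ps sr2 sd2 Hsr Hrd W b r \<Delta> |\<Delta>. norm \<Delta> \<le> \<epsilon>}"
    by (rule bdd_belowI[of _ 0]) (use snr_nonneg[OF assms(1-3)] in auto)
qed

lemma robust_ge:
  assumes "\<epsilon> \<ge> 0" "\<And>D. norm D \<le> \<epsilon> \<Longrightarrow> c \<le> snr Ps sr2 sd2 Hsr Hrd W b r D"
  shows "c \<le> robust_snr Ps sr2 sd2 \<epsilon> Hsr Hrd W b r"
  unfolding robust_snr_def
proof (rule cInf_greatest)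
  show "{snr Ps sr2 sd2 Hsr Hrd W b r \<Delta> |\<Delta>. norm \<Delta> \<le> \<epsilon>} \<noteq> {}"
    using assms(1) by (auto intro: exI[where x=0])
qed (use assms in auto)

lemma cinner_zero[simp]: "cinner r 0 = 0"
  by (simp add: cinner_def)

lemma cinner_scaleR_right: "cinner r (a *\<^sub>R y) = complex_of_real a * cinner r y"
  by (simp add: cinner_def sum_distrib_left) (simp add: scaleR_conv_of_real mult_ac)

lemma cinner_scaleR_left: "cinner (a *\<^sub>R r) y = complex_of_real a * cinner r y"
  by (simp add: cinner_def sum_distrib_left) (simp add: scaleR_conv_of_real mult_ac)

lemma choose_delta:
  fixes Hrd :: "complex^'n^'m" and r :: "complex^'m" and x :: "complex^'n"
  assumes nr: "norm r = 1" and e: "\<epsilon> \<ge> 0"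
  shows "\<exists>D. norm D \<le> \<epsilon> \<and> cmod (cinner r ((Hrd + D) *v x)) \<le> max (norm (Hrd *v x) - \<epsilon> * norm x) 0"
proof (cases "x = 0")
  case True then show ?thesis using e by (auto intro: exI[where x=0])
next
  case False
  define nx where "nx = norm x"
  have nx: "nx > 0" using False by (simp add: nx_def)
  define y where "y = cinner r (Hrd *v x)"
  have yle: "cmod y \<le> norm (Hrd *v x)" using cs_cinner[of r "Hrd *v x"] nr by (simp add: y_def)
  have split: "cinner r ((Hrd + D) *v x) = y + cinner r (D *v x)" for D
    by (simp add: y_def matrix_vector_mult_add_rdistrib cinner_add)
  show ?thesis
  proof (cases "cmod y \<le> \<epsilon> * nx")
    case True
    define D where "D = rk1 (- (y / complex_of_real (nx\<^sup>2))) r x"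
    have "norm D = cmod y / nx"
      using nx by (simp add: D_def norm_rk1 nr nx_def[symmetric] norm_divide norm_mult power2_eq_square)
    also have "\<dots> \<le> \<epsilon>" using True nx by (simp add: divide_le_eq mult.commute)
    finally have nD: "norm D \<le> \<epsilon>" .
    have "cinner r ((Hrd + D) *v x) = 0"
      using nx by (simp add: split D_def cinner_rk1 nr nx_def[symmetric])
    then show ?thesis using nD by (intro exI[where x=D]) simp
  next
    case False
    then have yp: "cmod y > 0" using nx e
      by (metis mult_nonneg_nonneg less_imp_le not_le norm_ge_zero order.not_eq_order_implies_strict zero_less_norm_iff)
    define D where "D = rk1 (- (complex_of_real (\<epsilon> / nx) * (y / complex_of_real (cmod y)))) r x"
    have "norm D = \<epsilon>"
      using nx yp e by (simp add: D_def norm_rk1 nr nx_def[symmetric] norm_divide norm_mult)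
    then have nD: "norm D \<le> \<epsilon>" by simp
    have "cinner r ((Hrd + D) *v x) = y - complex_of_real (\<epsilon> / nx) * (y / complex_of_real (cmod y)) * complex_of_real (nx\<^sup>2)"
      by (simp add: split D_def cinner_rk1 nr nx_def[symmetric])
    also have "\<dots> = complex_of_real (1 - \<epsilon> * nx / cmod y) * y"
      using nx yp by (simp add: field_simps power2_eq_square)
    finally have "cmod (cinner r ((Hrd + D) *v x)) = \<bar>1 - \<epsilon> * nx / cmod y\<bar> * cmod y"
      by (simp only: norm_mult norm_of_real)
    also have "\<dots> = cmod y - \<epsilon> * nx"
      using False yp by (simp add: abs_of_nonneg field_simps)
    also have "\<dots> \<le> max (norm (Hrd *v x) - \<epsilon> * norm x) 0" using yle by (simp add: nx_def)
    finally show ?thesis using nD by blast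
  qed
qed



lemma row_real:
  fixes A B h Ps sr2 Pr :: real
  assumes "A \<le> B * h" "Ps * A + sr2 * B \<le> Pr" "h \<ge> 0" "Ps > 0" "sr2 > 0"
  shows "A * (Ps * h + sr2) \<le> Pr * h"
proof -
  have "sr2 * A \<le> sr2 * (B * h)" using assms by (intro mult_left_mono) auto
  then have "A * (Ps * h + sr2) \<le> h * (Ps * A + sr2 * B)" by (simp add: algebra_simps)
  also have "\<dots> \<le> h * Pr" using assms by (intro mult_left_mono) auto
  finally show ?thesis by (simp add: mult.commute)
qed

lemma snr_assoc:
  "snr Ps sr2 sd2 Hsr Hrd W b r D =
   Ps * (cmod (cinner r ((Hrd + D) *v (W *v (Hsr *v b)))))\<^sup>2 /
     (sr2 * (norm (vcnj r v* ((Hrd + D) ** W)))\<^sup>2 + sd2)"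
  by (simp add: snr_def matrix_vector_mul_assoc matrix_mul_assoc)

lemma upper:
  fixes Hsr :: "complex ^ 'ms ^ 'n" and Hrd :: "complex ^ 'n ^ 'md"
    and w0 :: "complex ^ 'n" and b :: "complex ^ 'ms"
    and W' :: "complex ^ 'n ^ 'n" and b' :: "complex ^ 'ms" and r' :: "complex ^ 'md"
  assumes pos: "Ps > 0" "Pr > 0" "sr2 > 0" "sd2 > 0" "\<epsilon> \<ge> 0"
    and w0_opt: "\<forall>w. (\<forall>i. cmod (w $ i) \<le> 1) \<longrightarrow> fobj \<epsilon> Hrd w \<le> fobj \<epsilon> Hrd w0"
    and b_def: "is_top_eigvec (ctrans Hsr ** Hsr) b"
    and feas: "feasible1 Ps Pr sr2 Hsr W' b' r'"
  shows "robust_snr Ps sr2 sd2 \<epsilon> Hsr Hrd W' b' r' \<le>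
     (sqrt (Pr / (Ps * (norm (Hsr *v b))\<^sup>2 + sr2)))\<^sup>2 * Ps * (norm (Hsr *v b))\<^sup>2 * (max (fobj \<epsilon> Hrd w0) 0)\<^sup>2 /
     ((sqrt (Pr / (Ps * (norm (Hsr *v b))\<^sup>2 + sr2)))\<^sup>2 * sr2 * (max (fobj \<epsilon> Hrd w0) 0)\<^sup>2 + sd2)"
    (is "_ \<le> ?SNR")
proof -
  define h2 where "h2 = (norm (Hsr *v b))\<^sup>2"
  define F where "F = max (fobj \<epsilon> Hrd w0) 0"
  define u where "u = Hsr *v b'"
  define h' where "h' = (norm u)\<^sup>2"
  define x where "x = W' *v u"
  have diag: "\<And>i. Ps * (cmod (x$i))\<^sup>2 + sr2 * (norm (W'$i))\<^sup>2 \<le> Pr"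
    and nb': "norm b' = 1" and nr': "norm r' = 1"
    using feas unfolding feasible1_def diag_formula x_def u_def by auto
  have hh: "h' \<le> h2" unfolding h'_def h2_def u_def by (rule rayleigh[OF b_def nb'])
  have h2nn: "h2 \<ge> 0" by (simp add: h2_def)
  have SNRnn: "?SNR \<ge> 0" using pos h2nn unfolding h2_def[symmetric]
    by (intro divide_nonneg_pos) (auto intro: add_nonneg_pos)
  have rowx: "cmod (x$i) \<le> norm (W'$i) * norm u" for i
    using cs_bil[of "W'$i" u] by (simp add: x_def matrix_vector_mult_def)
  show ?thesis
  proof (cases "h' = 0")
    case True
    then have "u = 0" by (simp add: h'_def)
    then have "x = 0" by (simp add: x_def)
    then have "snr Ps sr2 sd2 Hsr Hrd W' b' r' 0 = 0"
      by (simp add: snr_assoc u_def[symmetric] x_def[symmetric])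
    moreover have "robust_snr Ps sr2 sd2 \<epsilon> Hsr Hrd W' b' r' \<le> snr Ps sr2 sd2 Hsr Hrd W' b' r' 0"
      using pos by (intro robust_le) auto
    ultimately show ?thesis using SNRnn by linarith
  next
    case False
    then have hp: "h' > 0" by (simp add: h'_def)
    define k where "k = sqrt (Pr * h' / (Ps * h' + sr2))"
    have pp: "Ps * h' + sr2 > 0" using pos hp by (simp add: add_pos_pos)
    have kp: "k > 0" unfolding k_def using pos hp pp by simp
    have k2: "k\<^sup>2 = Pr * h' / (Ps * h' + sr2)" unfolding k_def using pos hp pp by simp
    have xk: "cmod (x$i) \<le> k" for i
    proof -
      have "(cmod (x$i))\<^sup>2 \<le> (norm (W'$i))\<^sup>2 * h'"
        using rowx[of i] unfolding h'_def
        by (metis norm_ge_zero power_mono power_mult_distrib)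
      then have "(cmod (x$i))\<^sup>2 * (Ps * h' + sr2) \<le> Pr * h'"
        using diag[of i] pos hp by (intro row_real) auto
      then have "(cmod (x$i))\<^sup>2 \<le> k\<^sup>2" using pp by (simp add: k2 le_divide_eq)
      then show ?thesis using kp by (simp add: power2_le_iff_abs_le)
    qed
    define w where "w = (1/k) *\<^sub>R x"
    have "\<forall>i. cmod (w $ i) \<le> 1" using xk kp by (simp add: w_def divide_le_eq)
    then have "fobj \<epsilon> Hrd w \<le> fobj \<epsilon> Hrd w0" using w0_opt by blast
    moreover have "fobj \<epsilon> Hrd w = (norm (Hrd *v x) - \<epsilon> * norm x) / k"
      using kp by (simp add: fobj_def w_def mv_scaleR diff_divide_distrib)
    ultimately have "norm (Hrd *v x) - \<epsilon> * norm x \<le> k * fobj \<epsilon> Hrd w0"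
      using kp by (simp add: divide_le_eq mult.commute)
    moreover have "k * fobj \<epsilon> Hrd w0 \<le> k * F" "0 \<le> k * F"
      using kp unfolding F_def by (auto intro!: mult_left_mono mult_nonneg_nonneg)
    ultimately have mx: "max (norm (Hrd *v x) - \<epsilon> * norm x) 0 \<le> k * F"
      by simp
    obtain D where nD: "norm D \<le> \<epsilon>" and
      tD: "cmod (cinner r' ((Hrd + D) *v x)) \<le> max (norm (Hrd *v x) - \<epsilon> * norm x) 0"
      using choose_delta[OF nr' pos(5)] by blast
    define t where "t = cmod (cinner r' ((Hrd + D) *v x))"
    define G where "G = norm (vcnj r' v* ((Hrd + D) ** W'))"
    have t1: "t \<le> k * F" unfolding t_def by (rule order_trans[OF tD mx])
    have "t \<le> G * norm u"
      unfolding t_def G_def x_def matrix_vector_mul_assoc by (rule cs_mv)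
    then have t2: "t\<^sup>2 \<le> G\<^sup>2 * h'" unfolding h'_def
      by (metis t_def norm_ge_zero power_mono power_mult_distrib)
    have "snr Ps sr2 sd2 Hsr Hrd W' b' r' D = Ps * t\<^sup>2 / (sr2 * G\<^sup>2 + sd2)"
      by (simp add: snr_assoc t_def G_def u_def[symmetric] x_def[symmetric])
    also have "\<dots> \<le> ?SNR" unfolding h2_def[symmetric] F_def[symmetric]
      using pos hp hh t1 t2 by (intro final_bound) (auto simp: t_def k_def mult.commute)
    finally show ?thesis using robust_le[OF pos(1,3,4) nD, of Hsr Hrd W' b' r'] by linarith
  qed
qed



lemma mono_T:
  fixes a b sd2 T1 T2 :: real
  assumes "a \<ge> 0" "b \<ge> 0" "sd2 > 0" "0 \<le> T1" "T1 \<le> T2"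
  shows "a * T1 / (b * T1 + sd2) \<le> a * T2 / (b * T2 + sd2)"
proof -
  have "b * T1 \<ge> 0" "b * T2 \<ge> 0" using assms by auto
  then have d: "b * T1 + sd2 > 0" "b * T2 + sd2 > 0" using assms by linarith+
  have "T1 * sd2 \<le> T2 * sd2" using assms by (intro mult_right_mono) auto
  then have "T1 * (b * T2 + sd2) \<le> T2 * (b * T1 + sd2)" by (simp add: distrib_left mult_ac)
  then have "a * (T1 * (b * T2 + sd2)) \<le> a * (T2 * (b * T1 + sd2))" using assms by (intro mult_left_mono)
  then show ?thesis using d by (intro frac_cross) (simp_all add: mult_ac)
qed

lemma lowb:
  fixes Ps Pr sr2 sd2 h2 nu S F :: real
  assumes pos: "Ps > 0" "Pr > 0" "sr2 > 0" "sd2 > 0" and h: "nu \<ge> 0" "nu\<^sup>2 = h2"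
    and SF: "S \<ge> F" "F \<ge> 0"
  shows "(sqrt (Pr / (Ps * h2 + sr2)))\<^sup>2 * Ps * h2 * F\<^sup>2 / ((sqrt (Pr / (Ps * h2 + sr2)))\<^sup>2 * sr2 * F\<^sup>2 + sd2)
    \<le> Ps * (sqrt (Pr / (h2 * (Ps * h2 + sr2))) * h2 * S)\<^sup>2 /
       (sr2 * (sqrt (Pr / (h2 * (Ps * h2 + sr2))) * S * nu)\<^sup>2 + sd2)"
proof (cases "h2 = 0")
  case True
  have "sr2 * (sqrt (Pr / (h2 * (Ps * h2 + sr2))) * S * nu)\<^sup>2 \<ge> 0" using pos by simp
  then have "sr2 * (sqrt (Pr / (h2 * (Ps * h2 + sr2))) * S * nu)\<^sup>2 + sd2 > 0" using pos by linarith
  then show ?thesis using True pos by (simp add: divide_nonneg_pos)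
next
  case False
  have h2p: "h2 > 0" using False h by (metis zero_le_power2 order.not_eq_order_implies_strict)
  have "Ps * h2 > 0" using pos h2p by simp
  then have D: "Ps * h2 + sr2 > 0" using pos by linarith
  define P2 where "P2 = Pr / (Ps * h2 + sr2)"
  have P2: "(sqrt (Pr / (Ps * h2 + sr2)))\<^sup>2 = P2" unfolding P2_def using D pos by simp
  have c2: "(sqrt (Pr / (h2 * (Ps * h2 + sr2))))\<^sup>2 = Pr / (h2 * (Ps * h2 + sr2))"
    using D pos h2p by simp
  have c2h: "Pr / (h2 * (Ps * h2 + sr2)) * h2 = P2" unfolding P2_def using h2p by simp
  have num: "Ps * (sqrt (Pr / (h2 * (Ps * h2 + sr2))) * h2 * S)\<^sup>2 = (P2 * Ps * h2) * S\<^sup>2"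
    unfolding power_mult_distrib c2 c2h[symmetric] by (simp add: power2_eq_square mult_ac)
  have den: "sr2 * (sqrt (Pr / (h2 * (Ps * h2 + sr2))) * S * nu)\<^sup>2 = (P2 * sr2) * S\<^sup>2"
    unfolding power_mult_distrib c2 h(2) c2h[symmetric] by (simp add: mult_ac)
  have "F\<^sup>2 \<le> S\<^sup>2" using SF by (intro power_mono) auto
  then have "(P2 * Ps * h2) * F\<^sup>2 / ((P2 * sr2) * F\<^sup>2 + sd2) \<le> (P2 * Ps * h2) * S\<^sup>2 / ((P2 * sr2) * S\<^sup>2 + sd2)"
    using pos h2p D by (intro mono_T) (auto simp: P2_def)
  then show ?thesis unfolding num den P2 by (simp add: mult_ac)
qed

lemma outer_mv_nth: "(outer x y *v z) $ i = x $ i * cinner y z"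
  by (simp add: outer_def matrix_vector_mult_def cinner_def sum_distrib_left mult_ac)

lemma norm_row_outer: "norm (outer x y $ i) = cmod (x $ i) * norm y"
proof -
  have "(norm (outer x y $ i))\<^sup>2 = (cmod (x $ i) * norm y)\<^sup>2"
    by (simp add: norm_sq_vec outer_def norm_mult power_mult_distrib sum_distrib_left)
  then show ?thesis by (metis norm_ge_zero mult_nonneg_nonneg power2_eq_iff_nonneg)
qed

lemma norm_chi_cnj: "norm (\<chi> j. a * cnj ((u::complex^'n) $ j)) = cmod a * norm u"
proof -
  have "(norm (\<chi> j. a * cnj (u $ j)))\<^sup>2 = (cmod a * norm u)\<^sup>2"
    by (simp add: norm_sq_vec norm_mult power_mult_distrib sum_distrib_left)
  then show ?thesis by (metis norm_ge_zero mult_nonneg_nonneg power2_eq_iff_nonneg)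
qed

lemma mm_scaleR_right: "(A::complex^'n^'m) ** (c *\<^sub>R B) = c *\<^sub>R (A ** B)"
  by (simp add: matrix_matrix_mult_def vec_eq_iff scaleR_sum_right)

lemma vm_scaleR: "(v::complex^'m) v* (c *\<^sub>R A) = c *\<^sub>R (v v* A)"
  by (simp add: vector_matrix_mult_def vec_eq_iff scaleR_sum_right)

lemma vm_outer: "vcnj r v* outer z u = (\<chi> j. cinner r z * cnj (u $ j))"
  by (simp add: vector_matrix_mult_def outer_def cinner_def vec_eq_iff sum_distrib_left mult_ac)



lemma mv_scaleR_left: "(c *\<^sub>R (A::complex^'n^'m)) *v x = c *\<^sub>R (A *v x)"
  by (simp add: matrix_vector_mult_def vec_eq_iff scaleR_sum_right)

lemma third:
  fixes Hsr :: "complex ^ 'ms ^ 'n" and Hrd :: "complex ^ 'n ^ 'md"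
    and w0 :: "complex ^ 'n" and b :: "complex ^ 'ms"
  assumes pos: "Ps > 0" "Pr > 0" "sr2 > 0" "sd2 > 0" "\<epsilon> \<ge> 0"
    and w0_feas: "\<forall>i. cmod (w0 $ i) \<le> 1"
    and w0_opt: "\<forall>w. (\<forall>i. cmod (w $ i) \<le> 1) \<longrightarrow> fobj \<epsilon> Hrd w \<le> fobj \<epsilon> Hrd w0"
    and b_def: "is_top_eigvec (ctrans Hsr ** Hsr) b"
    and Hw: "Hrd *v w0 \<noteq> 0"
  shows "feasible1 Ps Pr sr2 Hsr
           (sqrt (Pr / ((norm (Hsr *v b))\<^sup>2 * (Ps * (norm (Hsr *v b))\<^sup>2 + sr2))) *\<^sub>R (outer w0 b ** ctrans Hsr))
           b ((Hrd *v w0) /\<^sub>R norm (Hrd *v w0))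
    \<and> robust_snr Ps sr2 sd2 \<epsilon> Hsr Hrd
           (sqrt (Pr / ((norm (Hsr *v b))\<^sup>2 * (Ps * (norm (Hsr *v b))\<^sup>2 + sr2))) *\<^sub>R (outer w0 b ** ctrans Hsr))
           b ((Hrd *v w0) /\<^sub>R norm (Hrd *v w0)) =
     (sqrt (Pr / (Ps * (norm (Hsr *v b))\<^sup>2 + sr2)))\<^sup>2 * Ps * (norm (Hsr *v b))\<^sup>2 * (max (fobj \<epsilon> Hrd w0) 0)\<^sup>2 /
     ((sqrt (Pr / (Ps * (norm (Hsr *v b))\<^sup>2 + sr2)))\<^sup>2 * sr2 * (max (fobj \<epsilon> Hrd w0) 0)\<^sup>2 + sd2)"
    (is "feasible1 _ _ _ _ ?W _ ?r \<and> _ = ?SNR")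
proof -
  define u where "u = Hsr *v b"
  define nu where "nu = norm u"
  define h2 where "h2 = nu\<^sup>2"
  define cW where "cW = sqrt (Pr / (h2 * (Ps * h2 + sr2)))"
  define F where "F = max (fobj \<epsilon> Hrd w0) 0"
  have nb: "norm b = 1" using b_def by (simp add: is_top_eigvec_def)
  have h2nn: "h2 \<ge> 0" by (simp add: h2_def)
  have cWnn: "cW \<ge> 0" unfolding cW_def using pos h2nn by simp
  have Weq: "?W = cW *\<^sub>R outer w0 u"
    by (simp add: cW_def h2_def nu_def u_def outer_ctrans)
  have ouu: "outer w0 u *v u = h2 *\<^sub>R w0"
    by (simp add: vec_eq_iff outer_mv_nth cinner_self h2_def nu_def) (simp add: scaleR_conv_of_real mult.commute)
  have Wu: "?W *v u = (cW * h2) *\<^sub>R w0"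
    by (simp add: Weq ouu mv_scaleR_left)
  have Wu': "?W *v (Hsr *v b) = (cW * h2) *\<^sub>R w0" using Wu by (simp add: u_def)
  have c2: "cW\<^sup>2 * h2 * (Ps * h2 + sr2) \<le> Pr"
  proof (cases "h2 = 0")
    case True then show ?thesis using pos by simp
  next
    case False
    then have "h2 > 0" using h2nn by simp
    moreover have "Ps * h2 + sr2 > 0" using pos h2nn by (simp add: add_nonneg_pos)
    ultimately show ?thesis unfolding cW_def using pos by simp
  qed
  have feas: "feasible1 Ps Pr sr2 Hsr ?W b ?r"
    unfolding feasible1_def diag_formula
  proof (intro conjI allI)
    fix i
    have "cmod ((?W *v (Hsr *v b)) $ i) = cW * h2 * cmod (w0 $ i)"
      using cWnn h2nn by (simp add: Wu' norm_mult)
    moreover have "norm (?W $ i) = cW * cmod (w0 $ i) * nu"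
      using cWnn by (simp add: Weq norm_row_outer nu_def)
    ultimately have "Ps * (cmod ((?W *v (Hsr *v b)) $ i))\<^sup>2 + sr2 * (norm (?W $ i))\<^sup>2
       = (cW\<^sup>2 * h2 * (Ps * h2 + sr2)) * (cmod (w0 $ i))\<^sup>2"
      by (simp add: power_mult_distrib h2_def algebra_simps power2_eq_square)
    also have "\<dots> \<le> Pr * 1"
      using c2 w0_feas pos by (intro mult_mono) (auto simp: power_le_one)
    finally show "Ps * (cmod ((?W *v (Hsr *v b)) $ i))\<^sup>2 + sr2 * (norm (?W $ i))\<^sup>2 \<le> Pr" by simp
  next
    show "norm b = 1" by (rule nb)
    show "norm ?r = 1" using Hw by simp
  qed
  have up: "robust_snr Ps sr2 sd2 \<epsilon> Hsr Hrd ?W b ?r \<le> ?SNR"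
    by (rule upper[OF pos w0_opt b_def feas])
  have low: "?SNR \<le> robust_snr Ps sr2 sd2 \<epsilon> Hsr Hrd ?W b ?r"
  proof (rule robust_ge[OF pos(5)])
    fix D :: "complex^'n^'md"
    assume nD: "norm D \<le> \<epsilon>"
    define M where "M = Hrd + D"
    define s where "s = cinner ?r (M *v w0)"
    have n1: "cmod (cinner ?r (Hrd *v w0)) = norm (Hrd *v w0)"
      using Hw by (simp add: cinner_scaleR_left cinner_self norm_mult norm_inverse power2_eq_square)
    have n2: "cmod (cinner ?r (D *v w0)) \<le> \<epsilon> * norm w0"
    proof -
      have "cmod (cinner ?r (D *v w0)) \<le> norm ?r * norm (D *v w0)" by (rule cs_cinner)
      also have "\<dots> = norm (D *v w0)" using Hw by simp
      also have "\<dots> \<le> norm D * norm w0" by (rule norm_mv)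
      also have "\<dots> \<le> \<epsilon> * norm w0" using nD by (intro mult_right_mono) auto
      finally show ?thesis .
    qed
    have "s = cinner ?r (Hrd *v w0) + cinner ?r (D *v w0)"
      by (simp add: s_def M_def matrix_vector_mult_add_rdistrib cinner_add)
    then have "cmod s \<ge> norm (Hrd *v w0) - \<epsilon> * norm w0"
      using norm_diff_ineq[of "cinner ?r (Hrd *v w0)" "cinner ?r (D *v w0)"] n1 n2 by simp
    then have sF: "cmod s \<ge> F" unfolding F_def fobj_def by simp
    have num: "cmod (cinner ?r (M *v (?W *v (Hsr *v b)))) = cW * h2 * cmod s"
      using cWnn h2nn by (simp add: Wu' mv_scaleR cinner_scaleR_right norm_mult s_def)
    have den: "norm (vcnj ?r v* (M ** ?W)) = cW * cmod s * nu"
      using cWnn by (simp add: Weq mm_scaleR_right vm_scaleR outer_left vm_outer norm_chi_cnj s_def nu_def)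
    have "snr Ps sr2 sd2 Hsr Hrd ?W b ?r D =
      Ps * (cW * h2 * cmod s)\<^sup>2 / (sr2 * (cW * cmod s * nu)\<^sup>2 + sd2)"
      unfolding snr_assoc M_def[symmetric] num den ..
    moreover have "?SNR \<le> Ps * (cW * h2 * cmod s)\<^sup>2 / (sr2 * (cW * cmod s * nu)\<^sup>2 + sd2)"
      unfolding cW_def h2_def[symmetric] nu_def[symmetric] u_def[symmetric] F_def[symmetric]
      using pos sF by (intro lowb) (auto simp: nu_def h2_def F_def)
    ultimately show "?SNR \<le> snr Ps sr2 sd2 Hsr Hrd ?W b ?r D" by simp
  qed
  show ?thesis using feas up low by simp
qed



lemma norm_axis_c: "norm (axis k (1::complex)) = 1"
proof -
  have "(norm (axis k (1::complex)))\<^sup>2 = 1"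
  proof -
    have "(\<lambda>i. (cmod (axis k (1::complex) $ i))\<^sup>2) = (\<lambda>i. if i = k then 1 else 0)"
      by (auto simp: axis_def)
    then show ?thesis by (simp add: norm_sq_vec)
  qed
  then show ?thesis by (metis norm_ge_zero power2_eq_iff_nonneg one_power2 zero_le_one)
qed

theorem theorem1:
  fixes Ps Pr sr2 sd2 \<epsilon> :: real
    and Hsr :: "complex ^ 'ms ^ 'n" and Hrd :: "complex ^ 'n ^ 'md"
    and w0 :: "complex ^ 'n" and b :: "complex ^ 'ms"
  assumes "Ps > 0" "Pr > 0" "sr2 > 0" "sd2 > 0" "\<epsilon> \<ge> 0"
    and w0_feas: "\<forall>i. cmod (w0 $ i) \<le> 1"
    and w0_opt: "\<forall>w. (\<forall>i. cmod (w $ i) \<le> 1) \<longrightarrow> fobj \<epsilon> Hrd w \<le> fobj \<epsilon> Hrd w0"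
    and b_def: "is_top_eigvec (ctrans Hsr ** Hsr) b"
  shows
    "let h2 = (norm (Hsr *v b))\<^sup>2;
         fo = fobj \<epsilon> Hrd w0;
         Pt = sqrt (Pr / (Ps * h2 + sr2));
         SNR = Pt\<^sup>2 * Ps * h2 * (max fo 0)\<^sup>2 / (Pt\<^sup>2 * sr2 * (max fo 0)\<^sup>2 + sd2);
         W = sqrt (Pr / (h2 * (Ps * h2 + sr2))) *\<^sub>R (outer w0 b ** ctrans Hsr);
         r = (Hrd *v w0) /\<^sub>R norm (Hrd *v w0)
     in (\<forall>(W'::complex ^ 'n ^ 'n) (b'::complex ^ 'ms) (r'::complex ^ 'md).
           feasible1 Ps Pr sr2 Hsr W' b' r' \<longrightarrow> robust_snr Ps sr2 sd2 \<epsilon> Hsr Hrd W' b' r' \<le> SNR)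
      \<and> (\<exists>(W'::complex ^ 'n ^ 'n) (b'::complex ^ 'ms) (r'::complex ^ 'md).
           feasible1 Ps Pr sr2 Hsr W' b' r' \<and> robust_snr Ps sr2 sd2 \<epsilon> Hsr Hrd W' b' r' = SNR)
      \<and> (Hrd *v w0 \<noteq> 0 \<longrightarrow>
           feasible1 Ps Pr sr2 Hsr W b r \<and> robust_snr Ps sr2 sd2 \<epsilon> Hsr Hrd W b r = SNR)"
proof -
  note pos = assms(1-5)
  define SNR where "SNR = (sqrt (Pr / (Ps * (norm (Hsr *v b))\<^sup>2 + sr2)))\<^sup>2 * Ps * (norm (Hsr *v b))\<^sup>2 * (max (fobj \<epsilon> Hrd w0) 0)\<^sup>2 /
     ((sqrt (Pr / (Ps * (norm (Hsr *v b))\<^sup>2 + sr2)))\<^sup>2 * sr2 * (max (fobj \<epsilon> Hrd w0) 0)\<^sup>2 + sd2)"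
  have P1: "\<forall>(W'::complex ^ 'n ^ 'n) (b'::complex ^ 'ms) (r'::complex ^ 'md).
           feasible1 Ps Pr sr2 Hsr W' b' r' \<longrightarrow> robust_snr Ps sr2 sd2 \<epsilon> Hsr Hrd W' b' r' \<le> SNR"
    unfolding SNR_def using upper[OF pos w0_opt b_def] by blast
  have P3: "Hrd *v w0 \<noteq> 0 \<longrightarrow>
    feasible1 Ps Pr sr2 Hsr
           (sqrt (Pr / ((norm (Hsr *v b))\<^sup>2 * (Ps * (norm (Hsr *v b))\<^sup>2 + sr2))) *\<^sub>R (outer w0 b ** ctrans Hsr))
           b ((Hrd *v w0) /\<^sub>R norm (Hrd *v w0))
    \<and> robust_snr Ps sr2 sd2 \<epsilon> Hsr Hrd
           (sqrt (Pr / ((norm (Hsr *v b))\<^sup>2 * (Ps * (norm (Hsr *v b))\<^sup>2 + sr2))) *\<^sub>R (outer w0 b ** ctrans Hsr))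
           b ((Hrd *v w0) /\<^sub>R norm (Hrd *v w0)) = SNR"
    unfolding SNR_def using third[OF pos w0_feas w0_opt b_def] by blast
  have P2: "\<exists>(W'::complex ^ 'n ^ 'n) (b'::complex ^ 'ms) (r'::complex ^ 'md).
           feasible1 Ps Pr sr2 Hsr W' b' r' \<and> robust_snr Ps sr2 sd2 \<epsilon> Hsr Hrd W' b' r' = SNR"
  proof (cases "Hrd *v w0 = 0")
    case False then show ?thesis using P3 by blast
  next
    case True
    obtain k :: 'md where True by blast
    define r' where "r' = axis k (1::complex)"
    have nb: "norm b = 1" using b_def by (simp add: is_top_eigvec_def)
    have feas: "feasible1 Ps Pr sr2 Hsr (0::complex^'n^'n) b r'"
      unfolding feasible1_def diag_formula r'_def using nb norm_axis_c pos by simp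
    have "fobj \<epsilon> Hrd w0 \<le> 0" using True pos by (simp add: fobj_def)
    then have S0: "SNR = 0" unfolding SNR_def by (simp add: max_def)
    have "robust_snr Ps sr2 sd2 \<epsilon> Hsr Hrd 0 b r' \<le> SNR" using P1 feas by blast
    moreover have "0 \<le> robust_snr Ps sr2 sd2 \<epsilon> Hsr Hrd 0 b r'"
      by (rule robust_ge[OF pos(5)], rule snr_nonneg[OF pos(1,3,4)])
    ultimately show ?thesis using feas S0 by (intro exI[where x=0] exI[where x=b] exI[where x=r']) simp
  qed
  show ?thesis unfolding Let_def SNR_def[symmetric] using P1 P2 P3 by blast
qed


end
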